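(* Let $(X,d)$ be a complete separable metric space without isolated points and let $f\colon X\to X$ be a continuous map. Then the following are equivalent: (1) for each $k\geq 2$, $\mathrm{Prox}_k(f)$ is dense in $X^k$; (2) there exist a sequence $\{p_n\}$ in $\mathbb{N}$ and a dense $\sigma$-Cantor subset $S$ of $X$ such that for any $x,y\in S$, $\lim_{n\to\infty} d(f^{p_n}(x),f^{p_n}(y))=0$.
   Context: For $k\geq 2$, $\mathrm{Prox}_k(f)=\{(x_1,\dots,x_k)\in X^k: \liminf_{n\to\infty}\max_{1\leq i<j\leq k} d(f^n(x_i),f^n(x_j))=0\}$. A $\sigma$-Cantor set is a countable union of sets each homeomorphic to the Cantor ternary set. *)

theory Defs
  imports "HOL-Analysis.Analysis"
begin

definition cantor_ternary_set :: "real set" where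
  "cantor_ternary_set = {(\<Sum>i. (if a i then 2 else 0) / 3 ^ Suc i) | a :: nat \<Rightarrow> bool. True}"

definition sigma_cantor :: "'a::topological_space set \<Rightarrow> bool" where
  "sigma_cantor S \<longleftrightarrow> (\<exists>\<K>. countable \<K> \<and> (\<forall>K\<in>\<K>. K homeomorphic cantor_ternary_set) \<and> S = \<Union>\<K>)"

definition Prox :: "nat \<Rightarrow> ('a::metric_space \<Rightarrow> 'a) \<Rightarrow> (nat \<Rightarrow> 'a) set" where
  "Prox k f = {x \<in> PiE {..<k} (\<lambda>_. UNIV).
     liminf (\<lambda>n. ereal (Max {dist ((f ^^ n) (x i)) ((f ^^ n) (x j)) | i j. i < j \<and> j < k})) = 0}"

end

theory Submission
  imports Defs
begin

definition ct :: "(nat \<Rightarrow> bool) \<Rightarrow> real" where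
  "ct a = (\<Sum>i. (if a i then 2 else 0) / 3 ^ Suc i)"

lemma cantor_range: "cantor_ternary_set = range ct"
  unfolding cantor_ternary_set_def ct_def by auto

lemma geo_tail: "(\<lambda>i. 2 / (3::real) ^ Suc (i + m)) sums (1 / 3 ^ m)"
proof -
  have "(\<lambda>i. (2 / 3 ^ Suc m) * (1/3::real) ^ i) sums ((2 / 3 ^ Suc m) * (1 / (1 - 1/3)))"
    by (intro sums_mult geometric_sums) simp
  moreover have "(2 / 3 ^ Suc m) * (1 / (1 - 1/3)) = (1 / (3::real) ^ m)" by simp
  moreover have "(\<lambda>i. (2 / 3 ^ Suc m) * (1/3::real) ^ i) = (\<lambda>i. 2 / (3::real) ^ Suc (i + m))"
    by (auto simp: power_add power_divide field_simps)
  ultimately show ?thesis by simp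
qed

lemma ct_term_summable: "summable (\<lambda>i. (if a i then 2 else 0) / (3::real) ^ Suc i)"
proof (rule summable_comparison_test')
  show "summable (\<lambda>i. 2 / (3::real) ^ Suc (i + 0))" using geo_tail[of 0] by (simp add: sums_summable)
  show "norm ((if a n then 2 else 0) / (3::real) ^ Suc n) \<le> 2 / 3 ^ Suc (n + 0)" for n by auto
qed

definition cD :: "(nat \<Rightarrow> bool) \<Rightarrow> (nat \<Rightarrow> bool) \<Rightarrow> nat \<Rightarrow> real" where
  "cD a b i = ((if a i then 2 else 0) - (if b i then 2 else 0)) / 3 ^ Suc i"

lemma cD_bound: "\<bar>cD a b i\<bar> \<le> 2 / 3 ^ Suc i"
  unfolding cD_def by auto

lemma ct_diff: "ct a - ct b = (\<Sum>i. cD a b (i + m)) + (\<Sum>i<m. cD a b i)"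
proof -
  have s: "summable (cD a b)"
    unfolding cD_def diff_divide_distrib
    by (intro summable_diff ct_term_summable)
  have "ct a - ct b = (\<Sum>i. cD a b i)"
    unfolding ct_def cD_def diff_divide_distrib
    by (intro suminf_diff ct_term_summable)
  also have "\<dots> = (\<Sum>i. cD a b (i + m)) + (\<Sum>i<m. cD a b i)"
    by (rule suminf_split_initial_segment[OF s])
  finally show ?thesis .
qed

lemma tail_bound: "\<bar>\<Sum>i. cD a b (i + m)\<bar> \<le> 1 / 3 ^ m"
proof -
  have g: "summable (\<lambda>i. 2 / (3::real) ^ Suc (i + m))" using geo_tail sums_summable by blast
  have sa: "summable (\<lambda>i. \<bar>cD a b (i + m)\<bar>)"
    by (rule summable_comparison_test'[OF g]) (use cD_bound in auto)
  have "\<bar>\<Sum>i. cD a b (i + m)\<bar> \<le> (\<Sum>i. \<bar>cD a b (i + m)\<bar>)" by (rule summable_rabs[OF sa])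
  also have "\<dots> \<le> (\<Sum>i. 2 / (3::real) ^ Suc (i + m))"
    by (rule suminf_le[OF _ sa g]) (use cD_bound in auto)
  also have "\<dots> = 1 / 3 ^ m" using geo_tail sums_unique by metis
  finally show ?thesis .
qed

lemma ct_close: assumes "\<forall>i<m. a i = b i" shows "\<bar>ct a - ct b\<bar> \<le> 1 / 3 ^ m"
proof -
  have "(\<Sum>i<m. cD a b i) = 0" using assms by (auto simp: cD_def intro: sum.neutral)
  then show ?thesis using ct_diff[of a b m] tail_bound[of a b m] by simp
qed

lemma ct_far: assumes "\<forall>i<m. a i = b i" "a m \<noteq> b m" shows "\<bar>ct a - ct b\<bar> \<ge> 1 / 3 ^ Suc m"
proof -
  have "(\<Sum>i<Suc m. cD a b i) = cD a b m" using assms(1) by (auto simp: cD_def intro: sum.neutral)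
  moreover have "\<bar>cD a b m\<bar> = 2 / 3 ^ Suc m" using assms(2) by (auto simp: cD_def)
  ultimately show ?thesis using ct_diff[of a b "Suc m"] tail_bound[of a b "Suc m"] by linarith
qed


lemma ct_agree: assumes "\<bar>ct a - ct b\<bar> < 1 / 3 ^ n" shows "\<forall>i<n. a i = b i"
proof (rule ccontr)
  assume "\<not> (\<forall>i<n. a i = b i)"
  then have ex: "\<exists>i. i < n \<and> a i \<noteq> b i" by auto
  define m where "m = (LEAST i. i < n \<and> a i \<noteq> b i)"
  have m: "m < n" "a m \<noteq> b m" using LeastI_ex[OF ex] unfolding m_def by auto
  have "\<forall>i<m. a i = b i"
    using not_less_Least[where P="\<lambda>i. i < n \<and> a i \<noteq> b i"] m(1) unfolding m_def
    by (meson less_trans)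
  then have "\<bar>ct a - ct b\<bar> \<ge> 1 / 3 ^ Suc m" using ct_far m(2) by blast
  moreover have "1 / (3::real) ^ n \<le> 1 / 3 ^ Suc m"
    using m(1) by (intro divide_left_mono power_increasing) auto
  ultimately show False using assms by linarith
qed

lemma ct_inj: "inj ct"
proof (rule injI)
  fix a b assume eq: "ct a = ct b"
  show "a = b"
  proof
    fix i
    have "\<bar>ct a - ct b\<bar> < 1 / 3 ^ Suc i" using eq by simp
    then show "a i = b i" using ct_agree by blast
  qed
qed

definition pre :: "nat \<Rightarrow> (nat \<Rightarrow> bool) \<Rightarrow> bool list" where
  "pre n a = map a [0..<n]"

lemma pre_Suc: "pre (Suc n) a = pre n a @ [a n]" by (simp add: pre_def)
lemma length_pre[simp]: "length (pre n a) = n" by (simp add: pre_def)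
lemma pre_eq_iff: "pre n a = pre n b \<longleftrightarrow> (\<forall>i<n. a i = b i)"
  by (auto simp: pre_def map_eq_conv)

lemma cantor_scheme:
  fixes U :: "bool list \<Rightarrow> 'a::complete_space set" and \<delta> :: "nat \<Rightarrow> real"
  assumes ne: "\<And>w. U w \<noteq> {}"
   and nest: "\<And>w b. closure (U (w @ [b])) \<subseteq> U w"
   and diam: "\<And>w x y. x \<in> U w \<Longrightarrow> y \<in> U w \<Longrightarrow> dist x y < 1 / real (Suc (length w))"
   and sep: "\<And>w w' x y. length w = length w' \<Longrightarrow> w \<noteq> w' \<Longrightarrow> x \<in> U w \<Longrightarrow> y \<in> U w' \<Longrightarrow> \<delta> (length w) \<le> dist x y"
   and dpos: "\<And>n. \<delta> n > 0"
  shows "\<exists>K. K homeomorphic cantor_ternary_set \<and> K \<noteq> {} \<and> (\<forall>x\<in>K. \<forall>n. \<exists>w. length w = n \<and> x \<in> U w)"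
proof -
  have nested: "U (pre n a) \<subseteq> U (pre m a)" if "m \<le> n" for m n a
    using that
  proof (induction n rule: dec_induct)
    case base then show ?case by simp
  next
    case (step n)
    have "U (pre (Suc n) a) \<subseteq> U (pre n a)"
      unfolding pre_Suc using nest closure_subset by blast
    then show ?case using step by blast
  qed
  have ex: "\<exists>z. \<forall>n. z \<in> closure (U (pre (Suc n) a))" for a
  proof -
    obtain z where "\<And>n. z \<in> closure (U (pre (Suc n) a))"
    proof (rule decreasing_closed_nest)
      show "closed (closure (U (pre (Suc n) a)))" for n by simp
      show "closure (U (pre (Suc n) a)) \<noteq> {}" for n using ne by simp
      show "closure (U (pre (Suc n) a)) \<subseteq> closure (U (pre (Suc m) a))" if "m \<le> n" for m n
        using nested[of "Suc m" "Suc n" a] that by (intro closure_mono) simp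
      show "\<exists>n. \<forall>x\<in>closure (U (pre (Suc n) a)). \<forall>y\<in>closure (U (pre (Suc n) a)). dist x y < e"
        if "e > 0" for e
      proof -
        obtain n where n: "inverse (real (Suc n)) < e" using reals_Archimedean[OF \<open>e > 0\<close>] by blast
        have "closure (U (pre (Suc n) a)) \<subseteq> U (pre n a)" using nest unfolding pre_Suc by blast
        then show ?thesis using diam[of _ "pre n a"] n
          by (intro exI[of _ n]) (fastforce simp: inverse_eq_divide)
      qed
    qed blast
    then show ?thesis by blast
  qed
  define \<Psi> where "\<Psi> a = (SOME z. \<forall>n. z \<in> closure (U (pre (Suc n) a)))" for a
  have \<Psi>U: "\<Psi> a \<in> U (pre n a)" for a n
  proof -
    have "\<Psi> a \<in> closure (U (pre (Suc n) a))" unfolding \<Psi>_def using someI_ex[OF ex[of a]] by blast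
    then show ?thesis using nest unfolding pre_Suc by blast
  qed
  have P1: "dist (\<Psi> a) (\<Psi> b) < 1 / real (Suc n)" if "\<forall>i<n. a i = b i" for a b n
  proof -
    have "pre n a = pre n b" using that by (simp add: pre_eq_iff)
    then show ?thesis using diam[OF \<Psi>U[of a n]] \<Psi>U[of b n] by simp
  qed
  have P2: "\<delta> n \<le> dist (\<Psi> a) (\<Psi> b)" if "\<not> (\<forall>i<n. a i = b i)" for a b n
  proof -
    have "pre n a \<noteq> pre n b" using that by (simp add: pre_eq_iff)
    have "\<delta> (length (pre n a)) \<le> dist (\<Psi> a) (\<Psi> b)"
      by (rule sep[OF _ _ \<Psi>U[of a n] \<Psi>U[of b n]]) (simp_all add: \<open>pre n a \<noteq> pre n b\<close>)
    then show ?thesis by simp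
  qed
  have injP: "inj \<Psi>"
  proof (rule injI)
    fix a b assume eq: "\<Psi> a = \<Psi> b"
    show "a = b"
    proof (rule ccontr)
      assume "a \<noteq> b"
      then obtain i where "a i \<noteq> b i" by auto
      then have "\<not> (\<forall>j<Suc i. a j = b j)" by auto
      from P2[OF this] dpos[of "Suc i"] eq show False by simp
    qed
  qed
  have hom: "homeomorphism (range \<Psi>) (range ct) (ct \<circ> inv \<Psi>) (\<Psi> \<circ> inv ct)"
    unfolding homeomorphism_def
  proof (intro conjI)
    show "\<forall>x\<in>range \<Psi>. (\<Psi> \<circ> inv ct) ((ct \<circ> inv \<Psi>) x) = x"
      using injP ct_inj by auto
    show "(ct \<circ> inv \<Psi>) ` range \<Psi> = range ct"
      using injP by (auto simp: image_comp)
    show "\<forall>y\<in>range ct. (ct \<circ> inv \<Psi>) ((\<Psi> \<circ> inv ct) y) = y"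
      using injP ct_inj by auto
    show "(\<Psi> \<circ> inv ct) ` range ct = range \<Psi>"
      using ct_inj by (auto simp: image_comp)
    show "continuous_on (range \<Psi>) (ct \<circ> inv \<Psi>)"
      unfolding continuous_on_iff
    proof (intro ballI allI impI)
      fix x e assume "x \<in> range \<Psi>" "(0::real) < e"
      then obtain a where xa: "x = \<Psi> a" by auto
      obtain n where n: "(1/3::real) ^ n < e" using real_arch_pow_inv[OF \<open>0 < e\<close>, of "1/3"] by auto
      show "\<exists>d>0. \<forall>x'\<in>range \<Psi>. dist x' x < d \<longrightarrow> dist ((ct \<circ> inv \<Psi>) x') ((ct \<circ> inv \<Psi>) x) < e"
      proof (intro exI[of _ "\<delta> n"] conjI ballI impI)
        show "\<delta> n > 0" by (rule dpos)
        fix x' assume "x' \<in> range \<Psi>" "dist x' x < \<delta> n"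
        then obtain b where xb: "x' = \<Psi> b" by auto
        have "\<forall>i<n. b i = a i"
        proof (rule ccontr)
          assume "\<not> (\<forall>i<n. b i = a i)"
          then have "\<delta> n \<le> dist (\<Psi> b) (\<Psi> a)" by (rule P2)
          with \<open>dist x' x < \<delta> n\<close> xa xb show False by simp
        qed
        then have "\<bar>ct b - ct a\<bar> \<le> 1 / 3 ^ n" by (rule ct_close)
        then show "dist ((ct \<circ> inv \<Psi>) x') ((ct \<circ> inv \<Psi>) x) < e"
          using xa xb injP n by (simp add: dist_real_def power_divide)
      qed
    qed
    show "continuous_on (range ct) (\<Psi> \<circ> inv ct)"
      unfolding continuous_on_iff
    proof (intro ballI allI impI)
      fix x e assume "x \<in> range ct" "(0::real) < e"
      then obtain a where xa: "x = ct a" by auto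
      obtain n where n: "inverse (real (Suc n)) < e" using reals_Archimedean[OF \<open>0 < e\<close>] by blast
      show "\<exists>d>0. \<forall>x'\<in>range ct. dist x' x < d \<longrightarrow> dist ((\<Psi> \<circ> inv ct) x') ((\<Psi> \<circ> inv ct) x) < e"
      proof (intro exI[of _ "1 / 3 ^ n"] conjI ballI impI)
        show "(0::real) < 1 / 3 ^ n" by simp
        fix x' assume "x' \<in> range ct" "dist x' x < 1 / 3 ^ n"
        then obtain b where xb: "x' = ct b" by auto
        have "\<forall>i<n. b i = a i" using ct_agree \<open>dist x' x < 1 / 3 ^ n\<close> xa xb by (simp add: dist_real_def)
        then have "dist (\<Psi> b) (\<Psi> a) < 1 / real (Suc n)" by (rule P1)
        then show "dist ((\<Psi> \<circ> inv ct) x') ((\<Psi> \<circ> inv ct) x) < e"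
          using xa xb ct_inj n by (simp add: inverse_eq_divide)
      qed
    qed
  qed
  show ?thesis
  proof (intro exI[of _ "range \<Psi>"] conjI)
    show "range \<Psi> homeomorphic cantor_ternary_set"
      unfolding cantor_range homeomorphic_def using hom by blast
    show "range \<Psi> \<noteq> {}" by simp
    show "\<forall>x\<in>range \<Psi>. \<forall>n. \<exists>w. length w = n \<and> x \<in> U w"
    proof (intro ballI allI)
      fix x n assume "x \<in> range \<Psi>"
      then obtain a where "x = \<Psi> a" by auto
      then show "\<exists>w. length w = n \<and> x \<in> U w" using \<Psi>U[of a n] length_pre[of n a] by blast
    qed
  qed
qed


lemma distinct_pts:
  fixes P :: "'i \<Rightarrow> 'a::{metric_space,perfect_space} set"
  assumes "finite I" "\<And>i. i \<in> I \<Longrightarrow> open (P i) \<and> P i \<noteq> {}"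
  shows "\<exists>y. inj_on y I \<and> (\<forall>i\<in>I. y i \<in> P i)"
  using assms
proof (induction I rule: finite_induct)
  case empty then show ?case by simp
next
  case (insert a F)
  then obtain y where y: "inj_on y F" "\<forall>i\<in>F. y i \<in> P i" by auto
  have oa: "open (P a)" "P a \<noteq> {}" using insert.prems by auto
  then obtain x where "x \<in> P a" by auto
  have "infinite (P a)"
    using infinite_openin[of UNIV "P a" x] oa \<open>x \<in> P a\<close> islimpt_UNIV by simp
  then have "infinite (P a - y ` F)" using insert.hyps(1) by (simp add: Diff_infinite_finite)
  then obtain z where z: "z \<in> P a" "z \<notin> y ` F"
  proof -
    from \<open>infinite (P a - y ` F)\<close> have "P a - y ` F \<noteq> {}" by (rule infinite_imp_nonempty)
    then show ?thesis using that by blast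
  qed
  show ?case
  proof (intro exI[of _ "y(a := z)"] conjI)
    show "inj_on (y(a := z)) (insert a F)"
      using y(1) z(2) insert.hyps(2) by (auto simp: inj_on_def)
    show "\<forall>i\<in>insert a F. (y(a := z)) i \<in> P i" using y(2) z(1) insert.hyps(2) by auto
  qed
qed

lemma finite_pos_uniform:
  fixes Q :: "'i \<Rightarrow> real \<Rightarrow> bool"
  assumes "finite A" "\<And>a. a \<in> A \<Longrightarrow> \<exists>e>0. \<forall>e'. 0 < e' \<and> e' \<le> e \<longrightarrow> Q a e'"
  shows "\<exists>e>0. \<forall>a\<in>A. Q a e"
proof -
  have "\<exists>e>0. \<forall>a\<in>A. \<forall>e'. 0 < e' \<and> e' \<le> e \<longrightarrow> Q a e'"
    using assms
  proof (induction A rule: finite_induct)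
    case empty then show ?case by (auto intro: exI[of _ 1])
  next
    case (insert a F)
    then obtain e1 where e1: "e1 > 0" "\<forall>b\<in>F. \<forall>e'. 0 < e' \<and> e' \<le> e1 \<longrightarrow> Q b e'" by auto
    obtain e2 where e2: "e2 > 0" "\<forall>e'. 0 < e' \<and> e' \<le> e2 \<longrightarrow> Q a e'" using insert.prems by auto
    show ?case using e1 e2 by (intro exI[of _ "min e1 e2"]) auto
  qed
  then show ?thesis by (meson order_refl)
qed

lemma funpow_cont:
  fixes f :: "'a::topological_space \<Rightarrow> 'a"
  assumes "continuous_on UNIV f"
  shows "continuous_on UNIV (f ^^ n)"
proof (induction n)
  case 0 then show ?case by (simp add: continuous_on_id continuous_on_id')
next
  case (Suc n)
  then show ?case
    using continuous_on_compose[OF Suc, of f] assms by (simp add: continuous_on_subset)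
qed

lemma prox_small:
  fixes f :: "'a::metric_space \<Rightarrow> 'a"
  assumes "w \<in> Prox k f" "(\<epsilon>::real) > 0"
  shows "\<exists>p. \<forall>i j. i < j \<and> j < k \<longrightarrow> dist ((f ^^ p) (w i)) ((f ^^ p) (w j)) < \<epsilon>"
proof -
  define M where "M n = Max {dist ((f ^^ n) (w i)) ((f ^^ n) (w j)) | i j. i < j \<and> j < k}" for n
  have lim: "liminf (\<lambda>n. ereal (M n)) = 0" using assms(1) unfolding Prox_def M_def by auto
  have "\<exists>n. M n < \<epsilon>"
  proof (rule ccontr)
    assume "\<nexists>n. M n < \<epsilon>"
    then have "\<forall>n. \<epsilon> \<le> M n" by (meson not_less)
    then have "ereal \<epsilon> \<le> liminf (\<lambda>n. ereal (M n))"
      unfolding le_Liminf_iff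
    proof (intro allI impI always_eventually)
      fix y x assume "y < ereal \<epsilon>"
      moreover have "ereal \<epsilon> \<le> ereal (M x)" using \<open>\<forall>n. \<epsilon> \<le> M n\<close> by simp
      ultimately show "y < ereal (M x)" by (rule less_le_trans)
    qed
    with lim assms(2) show False by simp
  qed
  then obtain n where n: "M n < \<epsilon>" by blast
  have fin: "finite {dist ((f ^^ n) (w i)) ((f ^^ n) (w j)) | i j. i < j \<and> j < k}"
  proof -
    have "{dist ((f ^^ n) (w i)) ((f ^^ n) (w j)) | i j. i < j \<and> j < k}
          \<subseteq> (\<lambda>(i,j). dist ((f ^^ n) (w i)) ((f ^^ n) (w j))) ` ({..<k} \<times> {..<k})" by auto
    then show ?thesis by (rule finite_subset) auto
  qed
  show ?thesis
  proof (intro exI[of _ n] allI impI)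
    fix i j assume ij: "i < j \<and> j < k"
    then have "dist ((f ^^ n) (w i)) ((f ^^ n) (w j)) \<le> M n"
      unfolding M_def by (intro Max_ge[OF fin]) auto
    then show "dist ((f ^^ n) (w i)) ((f ^^ n) (w j)) < \<epsilon>" using n by simp
  qed
qed


lemma prox_box:
  fixes f :: "'a::{metric_space,perfect_space} \<Rightarrow> 'a" and P :: "'i \<Rightarrow> 'a set"
  assumes H: "\<forall>k\<ge>2. (product_topology (\<lambda>_. euclidean) {..<k}) closure_of (Prox k f)
                 = topspace (product_topology (\<lambda>_. euclidean) {..<k})"
   and fin: "finite I" and op: "\<And>i. i \<in> I \<Longrightarrow> open (P i) \<and> P i \<noteq> {}" and e: "\<epsilon> > 0"
  shows "\<exists>x p. inj_on x I \<and> (\<forall>i\<in>I. x i \<in> P i) \<and>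
           (\<forall>i\<in>I. \<forall>i'\<in>I. dist ((f ^^ p) (x i)) ((f ^^ p) (x i')) < \<epsilon>)"
proof -
  obtain y where y: "inj_on y I" "\<forall>i\<in>I. y i \<in> P i" using distinct_pts[of I P] fin op by blast
  show ?thesis
  proof (cases "card I \<ge> 2")
    case False
    then have "card I \<le> 1" by simp
    have one: "\<forall>i\<in>I. \<forall>i'\<in>I. i = i'"
    proof (intro ballI, rule ccontr)
      fix i i' assume "i \<in> I" "i' \<in> I" "i \<noteq> i'"
      then have "card {i, i'} \<le> card I" by (intro card_mono fin) auto
      with \<open>card I \<le> 1\<close> \<open>i \<noteq> i'\<close> show False by simp
    qed
    show ?thesis using y e one by (intro exI[of _ y] exI[of _ 0]) auto
  next
    case True
    define k where "k = card I"
    have "\<exists>\<rho>>0. \<forall>ii\<in>I \<times> I. ball (y (fst ii)) \<rho> \<subseteq> P (fst ii) \<and>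
            (fst ii \<noteq> snd ii \<longrightarrow> 2 * \<rho> \<le> dist (y (fst ii)) (y (snd ii)))"
    proof (rule finite_pos_uniform)
      show "finite (I \<times> I)" using fin by simp
      fix ii assume ii: "ii \<in> I \<times> I"
      obtain i i' where ii': "ii = (i, i')" "i \<in> I" "i' \<in> I" using ii by auto
      obtain e1 where e1: "e1 > 0" "ball (y i) e1 \<subseteq> P i"
        using op[OF ii'(2)] y(2) ii'(2) open_contains_ball by blast
      have dpos: "i \<noteq> i' \<Longrightarrow> dist (y i) (y i') > 0"
        using y(1) ii' by (auto simp: inj_on_def)
      define e2 where "e2 = (if i \<noteq> i' then min e1 (dist (y i) (y i') / 2) else e1)"
      have "e2 > 0" using e1 dpos unfolding e2_def by auto
      moreover have "ball (y i) e' \<subseteq> P i \<and> (i \<noteq> i' \<longrightarrow> 2 * e' \<le> dist (y i) (y i'))"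
        if "0 < e'" "e' \<le> e2" for e'
      proof -
        have "e' \<le> e1" using that unfolding e2_def by (auto split: if_splits)
        then have "ball (y i) e' \<subseteq> ball (y i) e1" by auto
        moreover have "i \<noteq> i' \<longrightarrow> 2 * e' \<le> dist (y i) (y i')" using that unfolding e2_def by auto
        ultimately show ?thesis using e1 by blast
      qed
      ultimately show "\<exists>e>0. \<forall>e'. 0 < e' \<and> e' \<le> e \<longrightarrow>
          ball (y (fst ii)) e' \<subseteq> P (fst ii) \<and> (fst ii \<noteq> snd ii \<longrightarrow> 2 * e' \<le> dist (y (fst ii)) (y (snd ii)))"
        using ii' by auto
    qed
    then obtain \<rho> where \<rho>: "\<rho> > 0" "\<And>i. i \<in> I \<Longrightarrow> ball (y i) \<rho> \<subseteq> P i"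
      "\<And>i i'. i \<in> I \<Longrightarrow> i' \<in> I \<Longrightarrow> i \<noteq> i' \<Longrightarrow> 2 * \<rho> \<le> dist (y i) (y i')"
      by fastforce
    have disj: "u \<noteq> v" if "i \<in> I" "i' \<in> I" "i \<noteq> i'" "u \<in> ball (y i) \<rho>" "v \<in> ball (y i') \<rho>" for i i' u v
    proof
      assume "u = v"
      then have "dist (y i) (y i') < 2 * \<rho>" using that(4,5) dist_triangle_less_add[of "y i" u \<rho> "y i'" \<rho>]
        by (auto simp: dist_commute)
      with \<rho>(3)[OF that(1-3)] show False by simp
    qed
    obtain h where h: "bij_betw h {0..<k} I" using ex_bij_betw_nat_finite[OF fin] k_def by blast
    define z where "z = restrict (\<lambda>l. y (h l)) {..<k}"
    define T where "T = PiE {..<k} (\<lambda>l. ball (y (h l)) \<rho>)"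
    have hI: "h l \<in> I" if "l < k" for l using h that by (auto simp: bij_betw_def)
    have zT: "z \<in> T" unfolding z_def T_def using \<rho>(1) by auto
    have Topen: "openin (product_topology (\<lambda>_. euclidean) {..<k}) T"
      unfolding T_def by (subst openin_PiE) auto
    have "z \<in> product_topology (\<lambda>_. euclidean) {..<k} closure_of (Prox k f)"
      using H True k_def unfolding z_def by auto
    then obtain w where w: "w \<in> Prox k f" "w \<in> T"
      using zT Topen unfolding in_closure_of by blast
    obtain p where p: "\<And>i j. i < j \<Longrightarrow> j < k \<Longrightarrow> dist ((f ^^ p) (w i)) ((f ^^ p) (w j)) < \<epsilon>"
      using prox_small[OF w(1) e] by blast
    define g where "g = inv_into {0..<k} h"
    have g: "g i < k" "h (g i) = i" if "i \<in> I" for i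
      using that h unfolding g_def
      by (auto simp: bij_betw_def inv_into_into f_inv_into_f)
    define x where "x i = w (g i)" for i
    have xb: "x i \<in> ball (y i) \<rho>" if "i \<in> I" for i
    proof -
      have "w (g i) \<in> ball (y (h (g i))) \<rho>" using PiE_mem[OF w(2)[unfolded T_def], of "g i"] g(1)[OF that] by simp
      then show ?thesis using g[OF that] unfolding x_def by simp
    qed
    show ?thesis
    proof (intro exI[of _ x] exI[of _ p] conjI ballI)
      show "inj_on x I"
        unfolding inj_on_def using disj xb by blast
      show "x i \<in> P i" if "i \<in> I" for i using xb[OF that] \<rho>(2)[OF that] by blast
      fix i i' assume ii: "i \<in> I" "i' \<in> I"
      consider "g i < g i'" | "g i' < g i" | "g i = g i'" by linarith
      then show "dist ((f ^^ p) (x i)) ((f ^^ p) (x i')) < \<epsilon>"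
      proof cases
        case 1 then show ?thesis using p g ii unfolding x_def by blast
      next
        case 2 then show ?thesis using p g ii unfolding x_def by (metis dist_commute)
      next
        case 3 then show ?thesis using e unfolding x_def by simp
      qed
    qed
  qed
qed


lemma refine:
  fixes f :: "'a::{metric_space,perfect_space} \<Rightarrow> 'a" and P :: "'i \<Rightarrow> 'a set"
  assumes H: "\<forall>k\<ge>2. (product_topology (\<lambda>_. euclidean) {..<k}) closure_of (Prox k f)
                 = topspace (product_topology (\<lambda>_. euclidean) {..<k})"
   and cont: "continuous_on UNIV f"
   and fin: "finite I" and op: "\<And>i. i \<in> I \<Longrightarrow> open (P i) \<and> P i \<noteq> {}" and e: "\<epsilon> > 0"
  shows "\<exists>Q p \<delta>. \<delta> > 0 \<and>
    (\<forall>i\<in>I. open (Q i) \<and> Q i \<noteq> {} \<and> closure (Q i) \<subseteq> P i \<and> (\<forall>x\<in>Q i. \<forall>y\<in>Q i. dist x y < \<epsilon>)) \<and>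
    (\<forall>i\<in>I. \<forall>i'\<in>I. i \<noteq> i' \<longrightarrow> (\<forall>x\<in>Q i. \<forall>y\<in>Q i'. \<delta> \<le> dist x y)) \<and>
    (\<forall>i\<in>I. \<forall>i'\<in>I. \<forall>x\<in>Q i. \<forall>y\<in>Q i'. dist ((f ^^ p) x) ((f ^^ p) y) < \<epsilon>)"
proof -
  have e3: "\<epsilon> / 3 > 0" using e by simp
  obtain x p where x: "inj_on x I" "\<forall>i\<in>I. x i \<in> P i"
      "\<forall>i\<in>I. \<forall>i'\<in>I. dist ((f ^^ p) (x i)) ((f ^^ p) (x i')) < \<epsilon> / 3"
    using prox_box[where P=P, OF H fin op e3] by blast
  define g where "g = f ^^ p"
  have gc: "\<forall>x. \<forall>e>0. \<exists>d>0. \<forall>x'. dist x' x < d \<longrightarrow> dist (g x') (g x) < e"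
    using funpow_cont[OF cont, of p] unfolding g_def continuous_on_iff by blast
  have "\<exists>\<sigma>>0. \<forall>ii\<in>I \<times> I. cball (x (fst ii)) \<sigma> \<subseteq> P (fst ii) \<and> \<sigma> < \<epsilon> / 2 \<and>
           (\<forall>z. dist z (x (fst ii)) < \<sigma> \<longrightarrow> dist (g z) (g (x (fst ii))) < \<epsilon> / 3) \<and>
           (fst ii \<noteq> snd ii \<longrightarrow> 3 * \<sigma> \<le> dist (x (fst ii)) (x (snd ii)))"
  proof (rule finite_pos_uniform)
    show "finite (I \<times> I)" using fin by simp
    fix ii assume ii: "ii \<in> I \<times> I"
    obtain i i' where ii': "ii = (i, i')" "i \<in> I" "i' \<in> I" using ii by auto
    obtain e1 where e1: "e1 > 0" "cball (x i) e1 \<subseteq> P i"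
      using op[OF ii'(2)] x(2) ii'(2) open_contains_cball by blast
    obtain e2 where e2: "e2 > 0" "\<forall>z. dist z (x i) < e2 \<longrightarrow> dist (g z) (g (x i)) < \<epsilon> / 3"
      using gc e3 by blast
    have dpos: "i \<noteq> i' \<Longrightarrow> dist (x i) (x i') > 0"
      using x(1) ii' by (auto simp: inj_on_def)
    define e4 where "e4 = min (min e1 e2) (\<epsilon> / 4)"
    define e5 where "e5 = (if i \<noteq> i' then min e4 (dist (x i) (x i') / 3) else e4)"
    have e4p: "e4 > 0" using e1 e2 e unfolding e4_def by auto
    have "e5 > 0" using e4p dpos unfolding e5_def by auto
    moreover have "cball (x i) e' \<subseteq> P i \<and> e' < \<epsilon> / 2 \<and>
           (\<forall>z. dist z (x i) < e' \<longrightarrow> dist (g z) (g (x i)) < \<epsilon> / 3) \<and>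
           (i \<noteq> i' \<longrightarrow> 3 * e' \<le> dist (x i) (x i'))"
      if "0 < e'" "e' \<le> e5" for e'
    proof -
      have le: "e' \<le> e1" "e' \<le> e2" "e' \<le> \<epsilon> / 4"
        using that unfolding e5_def e4_def by (auto split: if_splits)
      have "cball (x i) e' \<subseteq> cball (x i) e1" using le by auto
      moreover have "i \<noteq> i' \<longrightarrow> 3 * e' \<le> dist (x i) (x i')" using that unfolding e5_def by auto
      ultimately show ?thesis using e1 e2 le e by force
    qed
    ultimately show "\<exists>e>0. \<forall>e'. 0 < e' \<and> e' \<le> e \<longrightarrow>
          cball (x (fst ii)) e' \<subseteq> P (fst ii) \<and> e' < \<epsilon> / 2 \<and>
           (\<forall>z. dist z (x (fst ii)) < e' \<longrightarrow> dist (g z) (g (x (fst ii))) < \<epsilon> / 3) \<and>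
           (fst ii \<noteq> snd ii \<longrightarrow> 3 * e' \<le> dist (x (fst ii)) (x (snd ii)))"
      using ii' by auto
  qed
  then obtain \<sigma>0 where \<sigma>0: "\<sigma>0 > 0" "\<forall>ii\<in>I \<times> I. cball (x (fst ii)) \<sigma>0 \<subseteq> P (fst ii) \<and> \<sigma>0 < \<epsilon> / 2 \<and>
           (\<forall>z. dist z (x (fst ii)) < \<sigma>0 \<longrightarrow> dist (g z) (g (x (fst ii))) < \<epsilon> / 3) \<and>
           (fst ii \<noteq> snd ii \<longrightarrow> 3 * \<sigma>0 \<le> dist (x (fst ii)) (x (snd ii)))" by blast
  define \<sigma> where "\<sigma> = min \<sigma>0 (\<epsilon> / 4)"
  have \<sigma>: "\<sigma> > 0" "\<sigma> < \<epsilon> / 2"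
     "\<And>i. i \<in> I \<Longrightarrow> cball (x i) \<sigma> \<subseteq> P i"
     "\<And>i z. i \<in> I \<Longrightarrow> dist z (x i) < \<sigma> \<Longrightarrow> dist (g z) (g (x i)) < \<epsilon> / 3"
     "\<And>i i'. i \<in> I \<Longrightarrow> i' \<in> I \<Longrightarrow> i \<noteq> i' \<Longrightarrow> 3 * \<sigma> \<le> dist (x i) (x i')"
  proof -
    show "\<sigma> > 0" "\<sigma> < \<epsilon> / 2" using \<sigma>0(1) e unfolding \<sigma>_def by auto
    have le: "\<sigma> \<le> \<sigma>0" unfolding \<sigma>_def by simp
    show "cball (x i) \<sigma> \<subseteq> P i" if "i \<in> I" for i
    proof -
      have "cball (x i) \<sigma>0 \<subseteq> P i" using \<sigma>0(2) that by fastforce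
      moreover have "cball (x i) \<sigma> \<subseteq> cball (x i) \<sigma>0" using le by auto
      ultimately show ?thesis by blast
    qed
    show "dist (g z) (g (x i)) < \<epsilon> / 3" if "i \<in> I" "dist z (x i) < \<sigma>" for i z
      using \<sigma>0(2) that le by fastforce
    show "3 * \<sigma> \<le> dist (x i) (x i')" if "i \<in> I" "i' \<in> I" "i \<noteq> i'" for i i'
      using \<sigma>0(2) that le by fastforce
  qed
  show ?thesis
  proof (intro exI[of _ "\<lambda>i. ball (x i) \<sigma>"] exI[of _ p] exI[of _ \<sigma>] conjI ballI impI)
    show "\<sigma> > 0" by fact
    fix i assume i: "i \<in> I"
    show "open (ball (x i) \<sigma>)" by simp
    show "ball (x i) \<sigma> \<noteq> {}" using \<sigma>(1) by simp
    have "closure (ball (x i) \<sigma>) \<subseteq> cball (x i) \<sigma>"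
      by (rule closure_minimal[OF ball_subset_cball closed_cball])
    then show "closure (ball (x i) \<sigma>) \<subseteq> P i" using \<sigma>(3)[OF i] by blast
    show "dist u v < \<epsilon>" if "u \<in> ball (x i) \<sigma>" "v \<in> ball (x i) \<sigma>" for u v
    proof -
      have "dist u v \<le> dist u (x i) + dist (x i) v" by (rule dist_triangle)
      then show ?thesis using that \<sigma>(2) by (simp add: dist_commute)
    qed
  next
    fix i i' assume i: "i \<in> I" "i' \<in> I" "i \<noteq> i'"
    show "\<sigma> \<le> dist u v" if "u \<in> ball (x i) \<sigma>" "v \<in> ball (x i') \<sigma>" for u v
    proof -
      have "dist (x i) (x i') \<le> dist (x i) u + dist u (x i')" by (rule dist_triangle)
      moreover have "dist u (x i') \<le> dist u v + dist v (x i')" by (rule dist_triangle)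
      ultimately show ?thesis using that \<sigma>(5)[OF i] by (simp add: dist_commute)
    qed
  next
    fix i i' assume i: "i \<in> I" "i' \<in> I"
    show "dist ((f ^^ p) u) ((f ^^ p) v) < \<epsilon>" if "u \<in> ball (x i) \<sigma>" "v \<in> ball (x i') \<sigma>" for u v
    proof -
      have a: "dist (g u) (g (x i)) < \<epsilon> / 3" using \<sigma>(4)[OF i(1)] that(1) by (simp add: dist_commute)
      have b: "dist (g v) (g (x i')) < \<epsilon> / 3" using \<sigma>(4)[OF i(2)] that(2) by (simp add: dist_commute)
      have c: "dist (g (x i)) (g (x i')) < \<epsilon> / 3" using x(3) i unfolding g_def by blast
      have "dist (g u) (g v) \<le> dist (g u) (g (x i)) + dist (g (x i)) (g v)" by (rule dist_triangle)
      moreover have "dist (g (x i)) (g v) \<le> dist (g (x i)) (g (x i')) + dist (g (x i')) (g v)"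
        by (rule dist_triangle)
      ultimately have "dist (g u) (g v) < \<epsilon>" using a b c by (simp add: dist_commute)
      then show ?thesis unfolding g_def .
    qed
  qed
qed




lemma dense_basis:
  "\<exists>B :: nat \<Rightarrow> 'a::{polish_space,perfect_space} set. (\<forall>j. open (B j) \<and> B j \<noteq> {}) \<and>
     (\<forall>T. open T \<and> T \<noteq> {} \<longrightarrow> (\<exists>j. B j \<subseteq> T))"
proof -
  obtain D :: "'a set" where D: "countable D" "\<forall>X. open X \<longrightarrow> X \<noteq> {} \<longrightarrow> (\<exists>d\<in>D. d \<in> X)"
    using countable_dense_exists by blast
  have "D \<noteq> {}" using D(2)[rule_format, of UNIV] by auto
  define B where "B j = ball (from_nat_into D (fst (prod_decode j))) (1 / real (Suc (snd (prod_decode j))))" for j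
  show ?thesis
  proof (intro exI[of _ B] conjI allI impI)
    fix j show "open (B j)" unfolding B_def by simp
  next
    fix j show "B j \<noteq> {}" unfolding B_def by simp
  next
    fix T :: "'a set" assume T: "open T \<and> T \<noteq> {}"
    then obtain x where x: "x \<in> T" by auto
    then obtain r where r: "r > 0" "ball x r \<subseteq> T" using T open_contains_ball by blast
    obtain m where m: "inverse (real (Suc m)) < r / 2" using reals_Archimedean[of "r/2"] r by auto
    obtain d where d: "d \<in> D" "d \<in> ball x (r / 2)" using D(2)[rule_format, of "ball x (r/2)"] r by auto
    obtain i where i: "from_nat_into D i = d" using from_nat_into_surj[OF D(1) d(1)] by blast
    have "B (prod_encode (i, m)) = ball d (1 / real (Suc m))" unfolding B_def using i by simp
    also have "\<dots> \<subseteq> ball x r"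
    proof
      fix z assume "z \<in> ball d (1 / real (Suc m))"
      then have "dist d z < r / 2" using m by (simp add: inverse_eq_divide)
      moreover have "dist x d < r / 2" using d(2) by simp
      moreover have "dist x z \<le> dist x d + dist d z" by (rule dist_triangle)
      ultimately show "z \<in> ball x r" by simp
    qed
    finally show "\<exists>j. B j \<subseteq> T" using r(2) by blast
  qed
qed


lemma forward:
  fixes f :: "'a::{polish_space, perfect_space} \<Rightarrow> 'a"
  assumes H: "\<forall>k\<ge>2. (product_topology (\<lambda>_. euclidean) {..<k}) closure_of (Prox k f)
                 = topspace (product_topology (\<lambda>_. euclidean) {..<k})"
   and cont: "continuous_on UNIV f"
  shows "\<exists>p :: nat \<Rightarrow> nat. \<exists>S. sigma_cantor S \<and> closure S = UNIV \<and>
               (\<forall>x\<in>S. \<forall>y\<in>S. (\<lambda>n. dist ((f ^^ p n) x) ((f ^^ p n) y)) \<longlonglongrightarrow> 0)"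
proof -
  obtain B :: "nat \<Rightarrow> 'a set" where Bo: "\<forall>j. open (B j) \<and> B j \<noteq> {}"
      "\<forall>T. open T \<and> T \<noteq> {} \<longrightarrow> (\<exists>j. B j \<subseteq> T)"
    using dense_basis[where 'a='a] by blast
  have B: "\<And>j. open (B j)" "\<And>j. B j \<noteq> {}" "\<And>T. open T \<Longrightarrow> T \<noteq> {} \<Longrightarrow> \<exists>j. B j \<subseteq> T"
    using Bo by auto
  define I where "I n = (SIGMA j:{..n}. {w :: bool list. length w = n - j})" for n
  have finI: "finite (I n)" for n
  proof -
    have "finite {w :: bool list. length w = m}" for m
      using finite_lists_length_eq[of "UNIV :: bool set" m] by simp
    then show ?thesis unfolding I_def by (intro finite_SigmaI) auto
  qed
  define par where "par U ji = (if snd ji = [] then B (fst ji) else U (fst ji, butlast (snd ji)))"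
    for U :: "nat \<times> bool list \<Rightarrow> 'a set" and ji
  define good where "good n U Qpd \<longleftrightarrow> (case Qpd of (Q, p, \<delta>) \<Rightarrow> \<delta> > 0 \<and>
    (\<forall>i\<in>I n. open (Q i) \<and> Q i \<noteq> {} \<and> closure (Q i) \<subseteq> par U i \<and>
        (\<forall>x\<in>Q i. \<forall>y\<in>Q i. dist x y < 1 / real (Suc n))) \<and>
    (\<forall>i\<in>I n. \<forall>i'\<in>I n. i \<noteq> i' \<longrightarrow> (\<forall>x\<in>Q i. \<forall>y\<in>Q i'. \<delta> \<le> dist x y)) \<and>
    (\<forall>i\<in>I n. \<forall>i'\<in>I n. \<forall>x\<in>Q i. \<forall>y\<in>Q i'. dist ((f ^^ p) x) ((f ^^ p) y) < 1 / real (Suc n)))"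
    for n U and Qpd :: "(nat \<times> bool list \<Rightarrow> 'a set) \<times> nat \<times> real"
  define step where "step n U = (SOME Qpd. good n U Qpd)" for n U
  have stepgood: "good n U (step n U)" if "\<forall>i\<in>I n. open (par U i) \<and> par U i \<noteq> {}" for n U
  proof -
    have "\<exists>Qpd. good n U Qpd"
      using refine[where P="par U", OF H cont finI, of n "1 / real (Suc n)"] that
      unfolding good_def by auto
    then show ?thesis unfolding step_def by (rule someI_ex)
  qed
  define st where "st = rec_nat (step 0 (\<lambda>_. UNIV)) (\<lambda>n r. step (Suc n) (fst r))"
  have st0: "st 0 = step 0 (\<lambda>_. UNIV)" unfolding st_def by simp
  have stS: "st (Suc n) = step (Suc n) (fst (st n))" for n unfolding st_def by simp
  define prevU where "prevU n = (case n of 0 \<Rightarrow> (\<lambda>_. UNIV) | Suc m \<Rightarrow> fst (st m))" for n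
  have st_eq: "st n = step n (prevU n)" for n
    by (cases n) (simp_all add: st0 stS prevU_def)
  have allgood: "good n (prevU n) (st n)" for n
  proof (induction n)
    case 0
    have "\<forall>i\<in>I 0. open (par (prevU 0) i) \<and> par (prevU 0) i \<noteq> {}"
      unfolding I_def par_def using B by auto
    then show ?case using stepgood st_eq by simp
  next
    case (Suc n)
    have "open (par (prevU (Suc n)) i) \<and> par (prevU (Suc n)) i \<noteq> {}" if i: "i \<in> I (Suc n)" for i
    proof (cases "snd i = []")
      case True then show ?thesis unfolding par_def using B by simp
    next
      case False
      obtain j w where jw: "i = (j, w)" by fastforce
      have "j \<le> Suc n" "length w = Suc n - j" using i jw unfolding I_def by auto
      moreover have "length w > 0" using False jw by simp
      ultimately have "(j, butlast w) \<in> I n" unfolding I_def by auto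
      then have "open (fst (st n) (j, butlast w)) \<and> fst (st n) (j, butlast w) \<noteq> {}"
        using Suc.IH unfolding good_def by (auto split: prod.splits)
      then show ?thesis using False jw unfolding par_def prevU_def by simp
    qed
    then show ?case using stepgood st_eq by simp
  qed
  define Ust where "Ust n = fst (st n)" for n
  define pp where "pp n = fst (snd (st n))" for n
  define ds where "ds n = snd (snd (st n))" for n
  have G: "ds n > 0"
     "\<And>i. i \<in> I n \<Longrightarrow> open (Ust n i) \<and> Ust n i \<noteq> {} \<and> closure (Ust n i) \<subseteq> par (prevU n) i \<and>
        (\<forall>x\<in>Ust n i. \<forall>y\<in>Ust n i. dist x y < 1 / real (Suc n))"
     "\<And>i i'. i \<in> I n \<Longrightarrow> i' \<in> I n \<Longrightarrow> i \<noteq> i' \<Longrightarrow> (\<forall>x\<in>Ust n i. \<forall>y\<in>Ust n i'. ds n \<le> dist x y)"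
     "\<And>i i'. i \<in> I n \<Longrightarrow> i' \<in> I n \<Longrightarrow> (\<forall>x\<in>Ust n i. \<forall>y\<in>Ust n i'. dist ((f ^^ pp n) x) ((f ^^ pp n) y) < 1 / real (Suc n))"
     for n
    using allgood[of n] unfolding good_def Ust_def pp_def ds_def by (auto split: prod.splits)
  have inI: "(j, w) \<in> I (j + length w)" for j w unfolding I_def by simp
  have "\<exists>K. K homeomorphic cantor_ternary_set \<and> K \<noteq> {} \<and>
          (\<forall>x\<in>K. \<forall>n. \<exists>w. length w = n \<and> x \<in> Ust (j + length w) (j, w))" for j
  proof (rule cantor_scheme[where \<delta>="\<lambda>l. ds (j + l)"])
    show "Ust (j + length w) (j, w) \<noteq> {}" for w using G(2)[OF inI] by blast
    show "closure (Ust (j + length (w @ [b])) (j, w @ [b])) \<subseteq> Ust (j + length w) (j, w)" for w b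
    proof -
      have "closure (Ust (j + length (w @ [b])) (j, w @ [b])) \<subseteq> par (prevU (Suc (j + length w))) (j, w @ [b])"
        using G(2)[OF inI[of j "w @ [b]"]] by simp
      also have "\<dots> = Ust (j + length w) (j, w)" unfolding par_def prevU_def Ust_def by simp
      finally show ?thesis .
    qed
    show "dist x y < 1 / real (Suc (length w))" if "x \<in> Ust (j + length w) (j, w)" "y \<in> Ust (j + length w) (j, w)" for w x y
    proof -
      have "dist x y < 1 / real (Suc (j + length w))" using G(2)[OF inI[of j w]] that by blast
      also have "\<dots> \<le> 1 / real (Suc (length w))" by (intro divide_left_mono) auto
      finally show ?thesis .
    qed
    show "ds (j + length w) \<le> dist x y"
      if "length w = length w'" "w \<noteq> w'" "x \<in> Ust (j + length w) (j, w)" "y \<in> Ust (j + length w') (j, w')" for w w' x y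
      using G(3)[OF inI[of j w], of "(j, w')"] inI[of j w'] that by auto
    show "ds (j + l) > 0" for l using G(1) by blast
  qed
  then obtain K where K: "\<And>j. K j homeomorphic cantor_ternary_set" "\<And>j. K j \<noteq> {}"
      "\<And>j x n. x \<in> K j \<Longrightarrow> \<exists>w. length w = n \<and> x \<in> Ust (j + length w) (j, w)"
    by metis
  define S where "S = (\<Union>j. K j)"
  have KB: "K j \<subseteq> B j" for j
  proof
    fix x assume "x \<in> K j"
    then obtain w where w: "length w = 0" "x \<in> Ust (j + length w) (j, w)" using K(3) by blast
    then have "x \<in> Ust j (j, [])" by simp
    moreover have "closure (Ust j (j, [])) \<subseteq> par (prevU j) (j, [])" using G(2)[OF inI[of j "[]"]] by simp
    ultimately show "x \<in> B j" unfolding par_def using closure_subset by fastforce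
  qed
  show ?thesis
  proof (intro exI[of _ pp] exI[of _ S] conjI ballI)
    show "sigma_cantor S" unfolding sigma_cantor_def S_def
      using K(1) by (intro exI[of _ "range K"]) auto
    show "closure S = UNIV"
    proof (rule ccontr)
      assume "closure S \<noteq> UNIV"
      then have "open (- closure S)" "- closure S \<noteq> {}" by auto
      then obtain j where "B j \<subseteq> - closure S" using B(3) by presburger
      moreover have "K j \<subseteq> S" unfolding S_def by blast
      then have "K j \<subseteq> closure S" using closure_subset[of S] by (rule order_trans)
      ultimately show False using KB[of j] K(2)[of j] by blast
    qed
    fix x y assume x: "x \<in> S" and y: "y \<in> S"
    then obtain i j where xi: "x \<in> K i" and yj: "y \<in> K j" unfolding S_def by blast
    show "(\<lambda>n. dist ((f ^^ pp n) x) ((f ^^ pp n) y)) \<longlonglongrightarrow> 0"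
      unfolding lim_sequentially
    proof (intro allI impI)
      fix r :: real assume "r > 0"
      then obtain N where N: "inverse (real (Suc N)) < r" using reals_Archimedean by blast
      show "\<exists>no. \<forall>n\<ge>no. dist (dist ((f ^^ pp n) x) ((f ^^ pp n) y)) 0 < r"
      proof (intro exI[of _ "max N (max i j)"] allI impI)
        fix n assume n: "max N (max i j) \<le> n"
        obtain w where w: "length w = n - i" "x \<in> Ust (i + length w) (i, w)" using K(3)[OF xi] by blast
        obtain w' where w': "length w' = n - j" "y \<in> Ust (j + length w') (j, w')" using K(3)[OF yj] by blast
        have e1: "i + length w = n" "j + length w' = n" using w(1) w'(1) n by auto
        have "dist ((f ^^ pp n) x) ((f ^^ pp n) y) < 1 / real (Suc n)"
        proof -
          have a: "(i, w) \<in> I n" "(j, w') \<in> I n" using inI[of i w] inI[of j w'] e1 by simp_all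
          have b: "x \<in> Ust n (i, w)" "y \<in> Ust n (j, w')" using w(2) w'(2) e1 by simp_all
          show ?thesis using G(4)[OF a] b by blast
        qed
        also have "\<dots> \<le> inverse (real (Suc N))" using n by (simp add: inverse_eq_divide divide_left_mono)
        finally show "dist (dist ((f ^^ pp n) x) ((f ^^ pp n) y)) 0 < r" using N by simp
      qed
    qed
  qed
qed



lemma liminf_crit:
  fixes M :: "nat \<Rightarrow> real"
  assumes nn: "\<And>n. M n \<ge> 0" and fr: "\<And>e N. e > 0 \<Longrightarrow> \<exists>n\<ge>N. M n < e"
  shows "liminf (\<lambda>n. ereal (M n)) = 0"
proof (rule antisym)
  show "liminf (\<lambda>n. ereal (M n)) \<le> 0"
    unfolding Liminf_def
  proof (rule SUP_least)
    fix P assume "P \<in> {P. eventually P sequentially}"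
    then obtain N where N: "\<And>n. n \<ge> N \<Longrightarrow> P n" by (auto simp: eventually_sequentially)
    show "(INF x\<in>Collect P. ereal (M x)) \<le> 0"
    proof (rule ereal_le_epsilon2)
      fix e :: real assume "e > 0"
      then obtain n where n: "n \<ge> N" "M n < e" using fr by blast
      have "(INF x\<in>Collect P. ereal (M x)) \<le> ereal (M n)" using N[OF n(1)] by (intro INF_lower) simp
      also have "\<dots> \<le> 0 + ereal e" using n(2) by simp
      finally show "(INF x\<in>Collect P. ereal (M x)) \<le> 0 + ereal e" .
    qed
  qed
  show "0 \<le> liminf (\<lambda>n. ereal (M n))"
    unfolding le_Liminf_iff
  proof (intro allI impI always_eventually)
    fix y x assume "y < (0::ereal)"
    also have "0 \<le> ereal (M x)" using nn by simp
    finally show "y < ereal (M x)" .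
  qed
qed

lemma prox_member:
  fixes f :: "'a::metric_space \<Rightarrow> 'a"
  assumes k: "k \<ge> 2" and y: "y \<in> PiE {..<k} (\<lambda>_. UNIV)"
    and fr: "\<And>e N. e > 0 \<Longrightarrow> \<exists>n\<ge>N. \<forall>i j. i < j \<and> j < k \<longrightarrow> dist ((f ^^ n) (y i)) ((f ^^ n) (y j)) < e"
  shows "y \<in> Prox k f"
proof -
  define A where "A n = {dist ((f ^^ n) (y i)) ((f ^^ n) (y j)) | i j. i < j \<and> j < k}" for n
  define M where "M n = Max (A n)" for n
  have finA: "finite (A n)" for n
  proof -
    have "A n \<subseteq> (\<lambda>(i,j). dist ((f ^^ n) (y i)) ((f ^^ n) (y j))) ` ({..<k} \<times> {..<k})"
      unfolding A_def by auto
    then show ?thesis by (rule finite_subset) auto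
  qed
  have neA: "A n \<noteq> {}" for n
  proof -
    have "(0::nat) < 1 \<and> 1 < k" using k by simp
    then have "dist ((f ^^ n) (y 0)) ((f ^^ n) (y 1)) \<in> A n" unfolding A_def by blast
    then show ?thesis by blast
  qed
  have "liminf (\<lambda>n. ereal (M n)) = 0"
  proof (rule liminf_crit)
    fix n
    obtain d where "d \<in> A n" using neA by blast
    then have "d \<le> M n" "d \<ge> 0" unfolding M_def using finA by (auto simp: A_def)
    then show "M n \<ge> 0" by simp
  next
    fix e :: real and N assume "e > 0"
    then obtain n where n: "n \<ge> N" "\<forall>i j. i < j \<and> j < k \<longrightarrow> dist ((f ^^ n) (y i)) ((f ^^ n) (y j)) < e"
      using fr by blast
    have "M n < e" unfolding M_def using finA neA n(2)
      by (subst Max_less_iff) (auto simp: A_def)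
    then show "\<exists>n\<ge>N. M n < e" using n(1) by blast
  qed
  then show ?thesis unfolding Prox_def using y by (simp add: M_def A_def)
qed

lemma freq_small:
  fixes f :: "'a::metric_space \<Rightarrow> 'a" and p :: "nat \<Rightarrow> nat"
  assumes cont: "continuous_on UNIV f" and dense: "closure S = UNIV"
    and lim: "\<forall>x\<in>S. \<forall>y\<in>S. (\<lambda>n. dist ((f ^^ p n) x) ((f ^^ p n) y)) \<longlonglongrightarrow> 0"
    and F: "finite F" "F \<subseteq> S" and e: "e > 0"
  shows "\<exists>n\<ge>N. \<forall>a\<in>F. \<forall>b\<in>F. dist ((f ^^ n) a) ((f ^^ n) b) < e"
proof (cases "\<forall>N m0. \<exists>m\<ge>m0. p m \<ge> N")
  case True
  have "eventually (\<lambda>m. \<forall>ab\<in>F \<times> F. dist ((f ^^ p m) (fst ab)) ((f ^^ p m) (snd ab)) < e) sequentially"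
  proof (rule eventually_ball_finite)
    show "finite (F \<times> F)" using F by simp
    show "\<forall>ab\<in>F \<times> F. eventually (\<lambda>m. dist ((f ^^ p m) (fst ab)) ((f ^^ p m) (snd ab)) < e) sequentially"
    proof
      fix ab assume "ab \<in> F \<times> F"
      then have "fst ab \<in> S" "snd ab \<in> S" using F by auto
      then show "eventually (\<lambda>m. dist ((f ^^ p m) (fst ab)) ((f ^^ p m) (snd ab)) < e) sequentially"
        using lim e by (intro order_tendstoD(2)[of _ 0]) auto
    qed
  qed
  then obtain m0 where m0: "\<And>m. m \<ge> m0 \<Longrightarrow> \<forall>ab\<in>F \<times> F. dist ((f ^^ p m) (fst ab)) ((f ^^ p m) (snd ab)) < e"
    by (auto simp: eventually_sequentially)
  obtain m where m: "m \<ge> m0" "p m \<ge> N" using True by blast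
  show ?thesis using m0[OF m(1)] m(2) by (intro exI[of _ "p m"]) auto
next
  case False
  then obtain N0 m0 where b: "\<And>m. m \<ge> m0 \<Longrightarrow> p m < N0" by (meson not_le)
  have "infinite {m0..}" by (rule infinite_Ici)
  moreover have "finite (p ` {m0..})"
    by (rule finite_subset[of _ "{..<N0}"]) (use b in auto)
  ultimately obtain a0 where a0: "a0 \<in> {m0..}" "infinite {a \<in> {m0..}. p a = p a0}"
    using pigeonhole_infinite by blast
  define c where "c = p a0"
  define Z where "Z = {a \<in> {m0..}. p a = c}"
  have Zinf: "infinite Z" using a0 unfolding Z_def c_def by simp
  have const_S: "(f ^^ c) x = (f ^^ c) y" if "x \<in> S" "y \<in> S" for x y
  proof (rule ccontr)
    assume ne: "(f ^^ c) x \<noteq> (f ^^ c) y"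
    define d where "d = dist ((f ^^ c) x) ((f ^^ c) y)"
    have "d > 0" using ne unfolding d_def by simp
    then have "eventually (\<lambda>m. dist ((f ^^ p m) x) ((f ^^ p m) y) < d) sequentially"
      using lim that by (intro order_tendstoD(2)[of _ 0]) auto
    then obtain m1 where m1: "\<And>m. m \<ge> m1 \<Longrightarrow> dist ((f ^^ p m) x) ((f ^^ p m) y) < d"
      by (auto simp: eventually_sequentially)
    obtain m where m: "m \<in> Z" "m \<ge> m1" using Zinf unfolding infinite_nat_iff_unbounded_le by blast
    have "p m = c" using m(1) unfolding Z_def by simp
    with m1[OF m(2)] show False unfolding d_def by simp
  qed
  have "S \<noteq> {}" using dense by auto
  then obtain s0 where s0: "s0 \<in> S" by blast
  have "closed {x. (f ^^ c) x = (\<lambda>_. (f ^^ c) s0) x}"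
    by (rule closed_Collect_eq[OF funpow_cont[OF cont] continuous_on_const])
  moreover have "S \<subseteq> {x. (f ^^ c) x = (\<lambda>_. (f ^^ c) s0) x}" using const_S s0 by blast
  ultimately have "closure S \<subseteq> {x. (f ^^ c) x = (\<lambda>_. (f ^^ c) s0) x}" by (rule closure_minimal[rotated])
  then have const: "(f ^^ c) x = (f ^^ c) s0" for x using dense by auto
  have eqab: "(f ^^ (max N c)) a = (f ^^ (max N c)) b" for a b
  proof -
    have "f ^^ (max N c) = (f ^^ (max N c - c)) \<circ> (f ^^ c)" by (simp add: funpow_add[symmetric])
    then show ?thesis using const[of a] const[of b] by simp
  qed
  show ?thesis
  proof (intro exI[of _ "max N c"] conjI ballI)
    show "N \<le> max N c" by simp
    fix a b show "dist ((f ^^ max N c) a) ((f ^^ max N c) b) < e" using eqab[of a b] e by simp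
  qed
qed


lemma backward:
  fixes f :: "'a::{polish_space, perfect_space} \<Rightarrow> 'a" and p :: "nat \<Rightarrow> nat"
  assumes cont: "continuous_on UNIV f" and dense: "closure S = UNIV"
    and lim: "\<forall>x\<in>S. \<forall>y\<in>S. (\<lambda>n. dist ((f ^^ p n) x) ((f ^^ p n) y)) \<longlonglongrightarrow> 0"
  shows "\<forall>k\<ge>2. (product_topology (\<lambda>_. euclidean) {..<k}) closure_of (Prox k f)
                 = topspace (product_topology (\<lambda>_. euclidean) {..<k})"
proof (intro allI impI)
  fix k :: nat assume k: "k \<ge> 2"
  let ?X = "product_topology (\<lambda>_. euclidean) {..<k} :: (nat \<Rightarrow> 'a) topology"
  show "?X closure_of Prox k f = topspace ?X"
  proof (rule antisym)
    show "?X closure_of Prox k f \<subseteq> topspace ?X" by (rule closure_of_subset_topspace)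
    show "topspace ?X \<subseteq> ?X closure_of Prox k f"
    proof
      fix z assume z: "z \<in> topspace ?X"
      show "z \<in> ?X closure_of Prox k f" unfolding in_closure_of
      proof (intro conjI allI impI)
        show "z \<in> topspace ?X" by fact
        fix T assume T: "z \<in> T \<and> openin ?X T"
        then obtain U where U: "\<forall>i\<in>{..<k}. openin euclidean (U i)" "z \<in> PiE {..<k} U" "PiE {..<k} U \<subseteq> T"
          unfolding openin_product_topology_alt by meson
        have ex: "\<exists>s. s \<in> S \<and> s \<in> U l" if l: "l < k" for l
        proof -
          have o: "open (U l)" using U(1) l by simp
          have "z l \<in> U l" using U(2) l by (auto simp: PiE_iff)
          then have "U l \<inter> closure S \<noteq> {}" using dense by auto
          then have "U l \<inter> S \<noteq> {}" using open_Int_closure_eq_empty[OF o] by blast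
          then show ?thesis by blast
        qed
        define y where "y = restrict (\<lambda>l. SOME s. s \<in> S \<and> s \<in> U l) {..<k}"
        have yl: "y l \<in> S \<and> y l \<in> U l" if "l < k" for l
          using someI_ex[OF ex[OF that]] that unfolding y_def by simp
        have yU: "y \<in> PiE {..<k} U" using yl unfolding y_def by (auto simp: PiE_iff)
        have yP: "y \<in> PiE {..<k} (\<lambda>_. UNIV)" unfolding y_def by simp
        have "y \<in> Prox k f"
        proof (rule prox_member[OF k yP])
          fix e :: real and N assume e: "e > 0"
          have F: "finite (y ` {..<k})" "y ` {..<k} \<subseteq> S" using yl by auto
          obtain n where n: "n \<ge> N" "\<forall>a\<in>y ` {..<k}. \<forall>b\<in>y ` {..<k}. dist ((f ^^ n) a) ((f ^^ n) b) < e"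
            using freq_small[OF cont dense lim F e] by blast
          show "\<exists>n\<ge>N. \<forall>i j. i < j \<and> j < k \<longrightarrow> dist ((f ^^ n) (y i)) ((f ^^ n) (y j)) < e"
          proof (intro exI[of _ n] conjI allI impI)
            show "N \<le> n" by fact
            fix i j assume "i < j \<and> j < k"
            then have "y i \<in> y ` {..<k}" "y j \<in> y ` {..<k}" by auto
            then show "dist ((f ^^ n) (y i)) ((f ^^ n) (y j)) < e" using n(2) by blast
          qed
        qed
        then show "\<exists>y. y \<in> Prox k f \<and> y \<in> T" using yU U(3) by blast
      qed
    qed
  qed
qed


theorem corollary2p4:
  fixes f :: "'a::{polish_space, perfect_space} \<Rightarrow> 'a"
  assumes "continuous_on UNIV f"
  shows "(\<forall>k\<ge>2. (product_topology (\<lambda>_. euclidean) {..<k}) closure_of (Prox k f)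
                 = topspace (product_topology (\<lambda>_. euclidean) {..<k}))
         \<longleftrightarrow> (\<exists>p :: nat \<Rightarrow> nat. \<exists>S. sigma_cantor S \<and> closure S = UNIV \<and>
               (\<forall>x\<in>S. \<forall>y\<in>S. (\<lambda>n. dist ((f ^^ p n) x) ((f ^^ p n) y)) \<longlonglongrightarrow> 0))"
proof
  assume H: "\<forall>k\<ge>2. (product_topology (\<lambda>_. euclidean) {..<k}) closure_of (Prox k f)
                 = topspace (product_topology (\<lambda>_. euclidean) {..<k})"
  show "\<exists>p :: nat \<Rightarrow> nat. \<exists>S. sigma_cantor S \<and> closure S = UNIV \<and>
               (\<forall>x\<in>S. \<forall>y\<in>S. (\<lambda>n. dist ((f ^^ p n) x) ((f ^^ p n) y)) \<longlonglongrightarrow> 0)"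
    by (rule forward[OF H assms])
next
  assume "\<exists>p :: nat \<Rightarrow> nat. \<exists>S. sigma_cantor S \<and> closure S = UNIV \<and>
               (\<forall>x\<in>S. \<forall>y\<in>S. (\<lambda>n. dist ((f ^^ p n) x) ((f ^^ p n) y)) \<longlonglongrightarrow> 0)"
  then obtain p :: "nat \<Rightarrow> nat" and S where pS: "closure S = UNIV"
      "\<forall>x\<in>S. \<forall>y\<in>S. (\<lambda>n. dist ((f ^^ p n) x) ((f ^^ p n) y)) \<longlonglongrightarrow> 0" by blast
  show "\<forall>k\<ge>2. (product_topology (\<lambda>_. euclidean) {..<k}) closure_of (Prox k f)
                 = topspace (product_topology (\<lambda>_. euclidean) {..<k})"
    by (rule backward[OF assms pS])
qed

end
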